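(* Let $\Sigma$ be a ranked alphabet, $B$ a strong bimonoid and $\mathcal{A}=(Q,\delta,F)$ a $(\Sigma,B)$-wta. If $\mathcal{A}$ has the finite order property, then $[\![\mathcal{R}(\mathcal{A})]\!]^{\mathrm{run}}=[\![\mathcal{A}]\!]^{\mathrm{run}}$.
   Context: Ranked alphabet $\Sigma$ ($\Sigma^{(0)}\ne\emptyset$), trees $T_\Sigma$, positions $\mathrm{pos}(\xi)$ ($\mathrm{pos}(\sigma(\xi_1,\dots,\xi_k))=\{\varepsilon\}\cup\{iv\mid v\in\mathrm{pos}(\xi_i)\}$); strong bimonoid $(B,\oplus,\otimes,\mathbb{0},\mathbb{1})$ (commutative monoid $(B,\oplus,\mathbb{0})$, monoid $(B,\otimes,\mathbb{1})$, $\mathbb{0}\ne\mathbb{1}$, $\mathbb{0}$ absorbing, no distributivity). For $b\in B$, $nb$ is the $n$-fold sum ($0b=\mathbb{0}$); $b$ has finite order if $\{nb\mid n\in\mathbb{N}\}$ is finite; then index $i(b)$ is the least $i\ge1$ with $ib=(i+k)b$ for some $k\ge1$, period $p(b)$ the least $p\ge1$ with $i(b)b=(i(b)+p)b$. $(\Sigma,B)$-wta $\mathcal{A}=(Q,\delta,F)$: $Q$ finite nonempty, $\delta_k:Q^k\times\Sigma^{(k)}\times Q\to B$, $F:Q\to B$. Runs: maps $\rho:\mathrm{pos}(\xi)\to Q$ ($R_{\mathcal{A}}(\xi)$; $q$-runs $R_{\mathcal{A}}(q,\xi)$ those with $\rho(\varepsilon)=q$); $\rho|_i(w)=\rho(iw)$;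 $\mathrm{wt}_{\mathcal{A}}(\rho)=\big(\bigotimes_{i=1}^k\mathrm{wt}_{\mathcal{A}}(\rho|_i)\big)\otimes\delta_k(\rho(1)\dots\rho(k),\sigma,\rho(\varepsilon))$; $[\![\mathcal{A}]\!]^{\mathrm{run}}(\xi)=\bigoplus_{\rho\in R_{\mathcal{A}}(\xi)}\mathrm{wt}_{\mathcal{A}}(\rho)\otimes F_{\rho(\varepsilon)}$. $H_{\mathcal{A}}$ is the smallest subset of $B$ containing $\bigcup_k\mathrm{im}(\delta_k)$ and closed under $\otimes$. $\mathcal{A}$ has the finite order property if $H_{\mathcal{A}}$ is finite and every element of $H_{\mathcal{A}}\otimes\mathrm{im}(F)=\{a\otimes c\mid a\in H_{\mathcal{A}},c\in\mathrm{im}(F)\}$ has finite order in $(B,\oplus,\mathbb{0})$. Then let $i_{\mathcal{A}}=\max\{i(b)\mid b\in H_{\mathcal{A}}\otimes\mathrm{im}(F)\}$, $p_{\mathcal{A}}=\mathrm{lcm}\{p(b)\mid b\in H_{\mathcal{A}}\otimes\mathrm{im}(F)\}$, $J_{\mathcal{A}}(n)=n$ if $n<i_{\mathcal{A}}$ and $J_{\mathcal{A}}(n)=i_{\mathcal{A}}+((n-i_{\mathcal{A}})\bmod p_{\mathcal{A}})$ otherwise. For $\xi\in T_\Sigma$ and $(q,b)\in Q\times H_{\mathcal{A}}$ let $p_\xi(q,b)=|\{\rho\in R_{\mathcal{A}}(q,\xi)\mid\mathrm{wt}_{\mathcal{A}}(\rho)=b\}|$ and $\pi_\xi(q,b)=J_{\mathcal{A}}(p_\xi(q,b))$,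 so $\pi_\xi:Q\times H_{\mathcal{A}}\to[0,i_{\mathcal{A}}+p_{\mathcal{A}}-1]$. $\mathcal{R}(\mathcal{A})=(Q_{\mathcal{R}},\delta_{\mathcal{R}},F_{\mathcal{R}})$ is the wta with $Q_{\mathcal{R}}=\{\pi_\xi\mid\xi\in T_\Sigma\}$ (a finite set); $(\delta_{\mathcal{R}})_k(\pi_{\xi_1}\dots\pi_{\xi_k},\sigma,\pi)=\mathbb{1}$ if $\pi=\pi_{\sigma(\xi_1,\dots,\xi_k)}$ and $\mathbb{0}$ otherwise (this depends only on $\pi_{\xi_1},\dots,\pi_{\xi_k}$, not on the chosen $\xi_i$); $(F_{\mathcal{R}})_{\pi_\xi}=\bigoplus_{(q,b)\in Q\times H_{\mathcal{A}}}\pi_\xi(q,b)(b\otimes F_q)$. *)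

theory Defs
  imports Main "HOL-Library.FuncSet"
begin

class strong_bimonoid = comm_monoid_add + monoid_mult + mult_zero + zero_neq_one

primrec natmul :: "nat \<Rightarrow> 'b::comm_monoid_add \<Rightarrow> 'b" where
  "natmul 0 b = 0"
| "natmul (Suc n) b = natmul n b + b"

definition finite_order :: "'b::comm_monoid_add \<Rightarrow> bool" where
  "finite_order b \<longleftrightarrow> finite {natmul n b | n. True}"

definition ord_index :: "'b::comm_monoid_add \<Rightarrow> nat" where
  "ord_index b = (LEAST i. 1 \<le> i \<and> (\<exists>k\<ge>1. natmul i b = natmul (i + k) b))"

definition ord_period :: "'b::comm_monoid_add \<Rightarrow> nat" where
  "ord_period b = (LEAST p. 1 \<le> p \<and> natmul (ord_index b) b = natmul (ord_index b + p) b)"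

datatype 'f tree = Node 'f "'f tree list"

definition ranked_alphabet :: "'f set \<Rightarrow> ('f \<Rightarrow> nat) \<Rightarrow> bool" where
  "ranked_alphabet Sig rk \<longleftrightarrow> finite Sig \<and> (\<exists>f\<in>Sig. rk f = 0)"

fun wf_tree :: "'f set \<Rightarrow> ('f \<Rightarrow> nat) \<Rightarrow> 'f tree \<Rightarrow> bool" where
  "wf_tree Sig rk (Node f ts) \<longleftrightarrow> f \<in> Sig \<and> length ts = rk f \<and> (\<forall>t\<in>set ts. wf_tree Sig rk t)"

definition trees :: "'f set \<Rightarrow> ('f \<Rightarrow> nat) \<Rightarrow> 'f tree set" where
  "trees Sig rk = {t. wf_tree Sig rk t}"

lemma size_in_lt: "b \<in> set ts \<Longrightarrow> size b < Suc (size_list size ts)"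
  by (induction ts) auto

text \<open>Positions; children are numbered from 0 (the paper numbers them from 1).\<close>
function pos :: "'f tree \<Rightarrow> nat list set" where
  "pos (Node f ts) = insert [] (\<Union>(i, t)\<in>set (zip [0..<length ts] ts). (\<lambda>v. i # v) ` pos t)"
  by pat_completeness auto
termination
  by (relation "measure size") (auto dest!: set_zip_rightD intro: size_in_lt)

text \<open>A wta is given by a state set Q, a transition function \<delta> (where \<delta> qs f q with
  length qs = rk f is the value \<delta>_k(qs, f, q)) and a root weight F.\<close>
definition wta :: "'q set \<Rightarrow> bool" where
  "wta Q \<longleftrightarrow> finite Q \<and> Q \<noteq> {}"

definition runs :: "'q set \<Rightarrow> 'f tree \<Rightarrow> (nat list \<Rightarrow> 'q) set" where
  "runs Q \<xi> = pos \<xi> \<rightarrow>\<^sub>E Q"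

definition qruns :: "'q set \<Rightarrow> 'q \<Rightarrow> 'f tree \<Rightarrow> (nat list \<Rightarrow> 'q) set" where
  "qruns Q q \<xi> = {\<rho> \<in> runs Q \<xi>. \<rho> [] = q}"

function wt :: "('q list \<Rightarrow> 'f \<Rightarrow> 'q \<Rightarrow> 'b::monoid_mult) \<Rightarrow> (nat list \<Rightarrow> 'q) \<Rightarrow> 'f tree \<Rightarrow> 'b" where
  "wt \<delta> \<rho> (Node f ts) =
     prod_list (map (\<lambda>(i, t). wt \<delta> (\<lambda>w. \<rho> (i # w)) t) (zip [0..<length ts] ts))
     * \<delta> (map (\<lambda>i. \<rho> [i]) [0..<length ts]) f (\<rho> [])"
  by pat_completeness auto
termination
  by (relation "measure (\<lambda>(_, _, t). size t)")
     (auto dest!: set_zip_rightD intro: size_in_lt)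

definition run_sem :: "'q set \<Rightarrow> ('q list \<Rightarrow> 'f \<Rightarrow> 'q \<Rightarrow> 'b::strong_bimonoid) \<Rightarrow> ('q \<Rightarrow> 'b) \<Rightarrow> 'f tree \<Rightarrow> 'b" where
  "run_sem Q \<delta> F \<xi> = (\<Sum>\<rho>\<in>runs Q \<xi>. wt \<delta> \<rho> \<xi> * F (\<rho> []))"

definition delta_image :: "'f set \<Rightarrow> ('f \<Rightarrow> nat) \<Rightarrow> 'q set \<Rightarrow> ('q list \<Rightarrow> 'f \<Rightarrow> 'q \<Rightarrow> 'b) \<Rightarrow> 'b set" where
  "delta_image Sig rk Q \<delta> = {\<delta> qs f q | qs f q. f \<in> Sig \<and> set qs \<subseteq> Q \<and> length qs = rk f \<and> q \<in> Q}"

inductive_set Hset :: "'f set \<Rightarrow> ('f \<Rightarrow> nat) \<Rightarrow> 'q set \<Rightarrow> ('q list \<Rightarrow> 'f \<Rightarrow> 'q \<Rightarrow> 'b::monoid_mult) \<Rightarrow> 'b set"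
  for Sig rk Q \<delta> where
  base: "b \<in> delta_image Sig rk Q \<delta> \<Longrightarrow> b \<in> Hset Sig rk Q \<delta>"
| mult: "a \<in> Hset Sig rk Q \<delta> \<Longrightarrow> b \<in> Hset Sig rk Q \<delta> \<Longrightarrow> a * b \<in> Hset Sig rk Q \<delta>"

definition HF :: "'f set \<Rightarrow> ('f \<Rightarrow> nat) \<Rightarrow> 'q set \<Rightarrow> ('q list \<Rightarrow> 'f \<Rightarrow> 'q \<Rightarrow> 'b::monoid_mult) \<Rightarrow> ('q \<Rightarrow> 'b) \<Rightarrow> 'b set" where
  "HF Sig rk Q \<delta> F = {a * c | a c. a \<in> Hset Sig rk Q \<delta> \<and> c \<in> F ` Q}"

definition finite_order_property :: "'f set \<Rightarrow> ('f \<Rightarrow> nat) \<Rightarrow> 'q set \<Rightarrow> ('q list \<Rightarrow> 'f \<Rightarrow> 'q \<Rightarrow> 'b::strong_bimonoid) \<Rightarrow> ('q \<Rightarrow> 'b) \<Rightarrow> bool" where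
  "finite_order_property Sig rk Q \<delta> F \<longleftrightarrow>
     finite (Hset Sig rk Q \<delta>) \<and> (\<forall>b\<in>HF Sig rk Q \<delta> F. finite_order b)"

definition iA :: "'f set \<Rightarrow> ('f \<Rightarrow> nat) \<Rightarrow> 'q set \<Rightarrow> ('q list \<Rightarrow> 'f \<Rightarrow> 'q \<Rightarrow> 'b::strong_bimonoid) \<Rightarrow> ('q \<Rightarrow> 'b) \<Rightarrow> nat" where
  "iA Sig rk Q \<delta> F = Max (ord_index ` HF Sig rk Q \<delta> F)"

definition pA :: "'f set \<Rightarrow> ('f \<Rightarrow> nat) \<Rightarrow> 'q set \<Rightarrow> ('q list \<Rightarrow> 'f \<Rightarrow> 'q \<Rightarrow> 'b::strong_bimonoid) \<Rightarrow> ('q \<Rightarrow> 'b) \<Rightarrow> nat" where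
  "pA Sig rk Q \<delta> F = Lcm (ord_period ` HF Sig rk Q \<delta> F)"

definition JA :: "'f set \<Rightarrow> ('f \<Rightarrow> nat) \<Rightarrow> 'q set \<Rightarrow> ('q list \<Rightarrow> 'f \<Rightarrow> 'q \<Rightarrow> 'b::strong_bimonoid) \<Rightarrow> ('q \<Rightarrow> 'b) \<Rightarrow> nat \<Rightarrow> nat" where
  "JA Sig rk Q \<delta> F n =
     (if n < iA Sig rk Q \<delta> F then n
      else iA Sig rk Q \<delta> F + (n - iA Sig rk Q \<delta> F) mod pA Sig rk Q \<delta> F)"

definition pcount :: "'q set \<Rightarrow> ('q list \<Rightarrow> 'f \<Rightarrow> 'q \<Rightarrow> 'b::monoid_mult) \<Rightarrow> 'f tree \<Rightarrow> 'q \<times> 'b \<Rightarrow> nat" where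
  "pcount Q \<delta> \<xi> qb = card {\<rho> \<in> qruns Q (fst qb) \<xi>. wt \<delta> \<rho> \<xi> = snd qb}"

text \<open>\<pi>_\<xi> : Q \<times> H_A \<rightarrow> nat, extended by 0 outside Q \<times> H_A (canonical representative).\<close>
definition piA :: "'f set \<Rightarrow> ('f \<Rightarrow> nat) \<Rightarrow> 'q set \<Rightarrow> ('q list \<Rightarrow> 'f \<Rightarrow> 'q \<Rightarrow> 'b::strong_bimonoid) \<Rightarrow> ('q \<Rightarrow> 'b) \<Rightarrow> 'f tree \<Rightarrow> 'q \<times> 'b \<Rightarrow> nat" where
  "piA Sig rk Q \<delta> F \<xi> qb =
     (if qb \<in> Q \<times> Hset Sig rk Q \<delta> then JA Sig rk Q \<delta> F (pcount Q \<delta> \<xi> qb) else 0)"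

definition QR :: "'f set \<Rightarrow> ('f \<Rightarrow> nat) \<Rightarrow> 'q set \<Rightarrow> ('q list \<Rightarrow> 'f \<Rightarrow> 'q \<Rightarrow> 'b::strong_bimonoid) \<Rightarrow> ('q \<Rightarrow> 'b) \<Rightarrow> ('q \<times> 'b \<Rightarrow> nat) set" where
  "QR Sig rk Q \<delta> F = piA Sig rk Q \<delta> F ` trees Sig rk"

definition deltaR :: "'f set \<Rightarrow> ('f \<Rightarrow> nat) \<Rightarrow> 'q set \<Rightarrow> ('q list \<Rightarrow> 'f \<Rightarrow> 'q \<Rightarrow> 'b::strong_bimonoid) \<Rightarrow> ('q \<Rightarrow> 'b)
    \<Rightarrow> ('q \<times> 'b \<Rightarrow> nat) list \<Rightarrow> 'f \<Rightarrow> ('q \<times> 'b \<Rightarrow> nat) \<Rightarrow> 'b" where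
  "deltaR Sig rk Q \<delta> F \<pi>s f \<pi> =
     (if \<pi> = piA Sig rk Q \<delta> F
              (Node f (map (\<lambda>\<pi>'. SOME \<xi>. \<xi> \<in> trees Sig rk \<and> piA Sig rk Q \<delta> F \<xi> = \<pi>') \<pi>s))
      then 1 else 0)"

definition FR :: "'f set \<Rightarrow> ('f \<Rightarrow> nat) \<Rightarrow> 'q set \<Rightarrow> ('q list \<Rightarrow> 'f \<Rightarrow> 'q \<Rightarrow> 'b::strong_bimonoid) \<Rightarrow> ('q \<Rightarrow> 'b)
    \<Rightarrow> ('q \<times> 'b \<Rightarrow> nat) \<Rightarrow> 'b" where
  "FR Sig rk Q \<delta> F \<pi> = (\<Sum>(q, b)\<in>Q \<times> Hset Sig rk Q \<delta>. natmul (\<pi> (q, b)) (b * F q))"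

end

theory Submission
  imports Defs
begin

lemma natmul_add: "natmul (m + n) b = natmul m b + natmul n b"
  by (induction n) (simp_all add: add.assoc)

lemma natmul_nat: "natmul n (c::nat) = n * c"
  by (induction n) simp_all

lemma sum_const_natmul: "finite S \<Longrightarrow> sum (\<lambda>_. c) S = natmul (card S) c"
  by (induction S rule: finite_induct) (simp_all add: add.commute)

lemma sum_group_natmul:
  fixes h :: "'x \<Rightarrow> 'b::comm_monoid_add"
  assumes "finite S" "finite X" "g ` S \<subseteq> X"
  shows "(\<Sum>a\<in>S. h (g a)) = (\<Sum>x\<in>X. natmul (card {a\<in>S. g a = x}) (h x))"
proof -
  have "(\<Sum>a\<in>S. h (g a)) = (\<Sum>x\<in>X. \<Sum>a\<in>{a\<in>S. g a = x}. h (g a))"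
    using sum.group[OF assms, of "\<lambda>a. h (g a)"] by simp
  also have "\<dots> = (\<Sum>x\<in>X. \<Sum>a\<in>{a\<in>S. g a = x}. h x)"
    by (rule sum.cong) auto
  also have "\<dots> = (\<Sum>x\<in>X. natmul (card {a\<in>S. g a = x}) (h x))"
    using assms(1) by (intro sum.cong refl sum_const_natmul) auto
  finally show ?thesis .
qed

lemma finite_listset: "\<forall>A\<in>set As. finite A \<Longrightarrow> finite (listset As)"
proof (induction As)
  case Nil then show ?case by simp
next
  case (Cons A As)
  have "listset (A # As) = (\<lambda>(a, l). a # l) ` (A \<times> listset As)"
    by (auto simp: set_Cons_def)
  then show ?case using Cons by simp
qed

lemma listset_Cons_eq:
  "{rs\<in>listset (A # As). P rs} = (\<lambda>(a, l). a # l) ` (SIGMA a:A. {l\<in>listset As. P (a # l)})"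
  by (auto simp: set_Cons_def)

lemma card_listset_Cons:
  assumes "finite A" "\<forall>A\<in>set As. finite A"
  shows "card {rs\<in>listset (A # As). P rs} = (\<Sum>a\<in>A. card {l\<in>listset As. P (a # l)})"
proof -
  have "inj_on (\<lambda>(a, l). a # l) (SIGMA a:A. {l\<in>listset As. P (a # l)})"
    by (auto simp: inj_on_def)
  then have "card {rs\<in>listset (A # As). P rs} = card (SIGMA a:A. {l\<in>listset As. P (a # l)})"
    unfolding listset_Cons_eq by (rule card_image)
  also have "\<dots> = (\<Sum>a\<in>A. card {l\<in>listset As. P (a # l)})"
    using assms finite_listset[OF assms(2)] by (intro card_SigmaI) auto
  finally show ?thesis .
qed

lemma sum_J_cong:
  fixes J :: "nat \<Rightarrow> nat"
  assumes addc: "\<And>a a' b. J a = J a' \<Longrightarrow> J (a + b) = J (a' + b)"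
    and "finite S" "\<forall>x\<in>S. J (f x) = J (g x)"
  shows "J (sum f S) = J (sum g S)"
  using assms(2,3)
proof (induction S rule: finite_induct)
  case empty then show ?case by simp
next
  case (insert x S)
  have "J (f x + sum f S) = J (g x + sum f S)" using insert(4) addc[of "f x" "g x" "sum f S"] by simp
  also have "\<dots> = J (g x + sum g S)" using insert(3,4) addc[of "sum f S" "sum g S" "g x"]
    by (simp add: add.commute)
  finally show ?case using insert by simp
qed

lemma count_cong:
  fixes J :: "nat \<Rightarrow> nat"
  assumes addc: "\<And>a a' b. J a = J a' \<Longrightarrow> J (a + b) = J (a' + b)"
    and mulc: "\<And>a a' b. J a = J a' \<Longrightarrow> J (a * b) = J (a' * b)"
  shows "length As = length Bs \<Longrightarrow> \<forall>A\<in>set As. finite A \<Longrightarrow> \<forall>B\<in>set Bs. finite B \<Longrightarrow>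
    \<forall>i<length As. \<forall>x. J (card {a\<in>As!i. g a = x}) = J (card {b\<in>Bs!i. g b = x}) \<Longrightarrow>
    J (card {rs\<in>listset As. P (map g rs)}) = J (card {rs\<in>listset Bs. P (map g rs)})"
proof (induction As arbitrary: Bs P)
  case Nil then show ?case by simp
next
  case (Cons A As)
  then obtain B Bs' where Bs: "Bs = B # Bs'" by (cases Bs) auto
  let ?X = "g ` A \<union> g ` B"
  define NA where "NA x = card {l\<in>listset As. P (x # map g l)}" for x
  define NB where "NB x = card {l\<in>listset Bs'. P (x # map g l)}" for x
  have fA: "finite A" "\<forall>A\<in>set As. finite A" using Cons.prems by auto
  have fB: "finite B" "\<forall>A\<in>set Bs'. finite A" using Cons.prems Bs by auto
  have eA: "card {rs\<in>listset (A # As). P (map g rs)} = (\<Sum>x\<in>?X. card {a\<in>A. g a = x} * NA x)"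
  proof -
    have "card {rs\<in>listset (A # As). P (map g rs)} = (\<Sum>a\<in>A. NA (g a))"
      unfolding NA_def by (subst card_listset_Cons[OF fA]) simp
    also have "\<dots> = (\<Sum>x\<in>?X. natmul (card {a\<in>A. g a = x}) (NA x))"
      using fA fB by (intro sum_group_natmul) auto
    finally show ?thesis by (simp add: natmul_nat)
  qed
  have eB: "card {rs\<in>listset (B # Bs'). P (map g rs)} = (\<Sum>x\<in>?X. card {a\<in>B. g a = x} * NB x)"
  proof -
    have "card {rs\<in>listset (B # Bs'). P (map g rs)} = (\<Sum>a\<in>B. NB (g a))"
      unfolding NB_def by (subst card_listset_Cons[OF fB]) simp
    also have "\<dots> = (\<Sum>x\<in>?X. natmul (card {a\<in>B. g a = x}) (NB x))"
      using fA fB by (intro sum_group_natmul) auto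
    finally show ?thesis by (simp add: natmul_nat)
  qed
  have "J (card {a\<in>A. g a = x} * NA x) = J (card {a\<in>B. g a = x} * NB x)" for x
  proof -
    have h0: "J (card {a\<in>A. g a = x}) = J (card {a\<in>B. g a = x})"
      using Cons.prems(4)[rule_format, of 0 x] Bs by simp
    have h1: "J (NA x) = J (NB x)" unfolding NA_def NB_def
    proof (rule Cons.IH)
      show "length As = length Bs'" using Cons.prems Bs by simp
      show "\<forall>A\<in>set As. finite A" "\<forall>B\<in>set Bs'. finite B" using fA fB by auto
      show "\<forall>i<length As. \<forall>x. J (card {a\<in>As!i. g a = x}) = J (card {b\<in>Bs'!i. g b = x})"
      proof (intro allI impI)
        fix i y assume "i < length As"
        then show "J (card {a\<in>As!i. g a = y}) = J (card {b\<in>Bs'!i. g b = y})"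
          using Cons.prems(4)[rule_format, of "Suc i" y] Bs by simp
      qed
    qed
    have "J (card {a\<in>A. g a = x} * NA x) = J (card {a\<in>B. g a = x} * NA x)"
      using mulc[OF h0] .
    also have "\<dots> = J (card {a\<in>B. g a = x} * NB x)"
      using mulc[OF h1, of "card {a\<in>B. g a = x}"] by (simp add: mult.commute)
    finally show ?thesis .
  qed
  then show ?case unfolding Bs eA eB using fA fB
    by (intro sum_J_cong[where J=J, OF addc]) auto
qed

lemma set_zip_upt: "(i, t) \<in> set (zip [0..<length ts] ts) \<longleftrightarrow> i < length ts \<and> t = ts ! i"
  by (auto simp: set_zip intro!: exI[of _ i])
lemma Nil_pos: "[] \<in> pos t"
  by (cases t) simp
lemma map_zip_upt: "map (\<lambda>(i, t). h i t) (zip [0..<length ts] ts) = map (\<lambda>i. h i (ts ! i)) [0..<length ts]"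
  by (rule nth_equalityI) auto
lemma Cons_pos: "i # v \<in> pos (Node f ts) \<longleftrightarrow> i < length ts \<and> v \<in> pos (ts ! i)"
  by (auto simp: set_zip_upt intro!: bexI[of _ "(i, ts!i)"])
lemma finite_pos: "finite (pos t)"
  by (induction t) (auto simp: set_zip_upt)lemma wt_Node':
  "wt \<delta> \<rho> (Node f ts) = prod_list (map (\<lambda>i. wt \<delta> (\<lambda>w. \<rho> (i # w)) (ts ! i)) [0..<length ts])
     * \<delta> (map (\<lambda>i. \<rho> [i]) [0..<length ts]) f (\<rho> [])"
  by (simp only: wt.simps map_zip_upt[where h = "\<lambda>i t. wt \<delta> (\<lambda>w. \<rho> (i # w)) t"])

lemma wt_cong: "\<forall>w\<in>pos t. \<rho> w = \<rho>' w \<Longrightarrow> wt \<delta> \<rho> t = wt \<delta> \<rho>' t"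
proof (induction t arbitrary: \<rho> \<rho>')
  case (Node f ts)
  have r: "\<rho> [] = \<rho>' []" using Node.prems by simp
  have c: "\<rho> [i] = \<rho>' [i]" if "i < length ts" for i
  proof -
    have "[i] \<in> pos (Node f ts)" using Cons_pos[of i "[]" f ts] that Nil_pos by simp
    then show ?thesis using Node.prems by blast
  qed
  have w: "wt \<delta> (\<lambda>w. \<rho> (i # w)) (ts ! i) = wt \<delta> (\<lambda>w. \<rho>' (i # w)) (ts ! i)" if "i < length ts" for i
  proof (rule Node.IH)
    show "ts ! i \<in> set ts" using that by simp
    have "\<forall>w\<in>pos (ts ! i). i # w \<in> pos (Node f ts)"
    proof
      fix w assume "w \<in> pos (ts ! i)"
      then show "i # w \<in> pos (Node f ts)" using Cons_pos[of i w f ts] that by blast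
    qed
    then show "\<forall>w\<in>pos (ts ! i). \<rho> (i # w) = \<rho>' (i # w)" using Node.prems by blast
  qed
  have m1: "map (\<lambda>i. wt \<delta> (\<lambda>w. \<rho> (i # w)) (ts ! i)) [0..<length ts]
      = map (\<lambda>i. wt \<delta> (\<lambda>w. \<rho>' (i # w)) (ts ! i)) [0..<length ts]"
    by (intro map_cong refl) (simp add: w)
  have m2: "map (\<lambda>i. \<rho> [i]) [0..<length ts] = map (\<lambda>i. \<rho>' [i]) [0..<length ts]"
    by (intro map_cong refl) (simp add: c)
  show ?case unfolding wt_Node' m1 m2 r ..
qed

lemma in_listset_iff: "rs \<in> listset As \<longleftrightarrow> length rs = length As \<and> (\<forall>i<length As. rs ! i \<in> As ! i)"
proof (induction As arbitrary: rs)
  case Nil then show ?case by simp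
next
  case (Cons A As)
  show ?case
  proof (cases rs)
    case Nil then show ?thesis by (simp add: set_Cons_def)
  next
    case (Cons r rs')
    have "r # rs' \<in> listset (A # As) \<longleftrightarrow> r \<in> A \<and> rs' \<in> listset As"
      by (simp add: set_Cons_def)
    also have "\<dots> \<longleftrightarrow> length (r # rs') = length (A # As) \<and> (\<forall>i<length (A # As). (r # rs') ! i \<in> (A # As) ! i)"
      unfolding Cons.IH[of rs'] by (auto simp: less_Suc_eq_0_disj)
    finally show ?thesis using Cons by simp
  qed
qed

lemma prod_list_H: "\<forall>x\<in>set xs. x \<in> Hset Sig rk Q \<delta> \<Longrightarrow> d \<in> Hset Sig rk Q \<delta> \<Longrightarrow> prod_list xs * d \<in> Hset Sig rk Q \<delta>"
proof (induction xs)
  case Nil then show ?case by simp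
next
  case (Cons x xs)
  then have "x \<in> Hset Sig rk Q \<delta>" "prod_list xs * d \<in> Hset Sig rk Q \<delta>" by auto
  then have "x * (prod_list xs * d) \<in> Hset Sig rk Q \<delta>" by (rule Hset.mult)
  then show ?case by (simp add: mult.assoc)
qed

lemma child_pos: "i < length ts \<Longrightarrow> v \<in> pos (ts ! i) \<Longrightarrow> i # v \<in> pos (Node f ts)"
  using Cons_pos[of i v f ts] by simp

lemma wt_in_H: "wf_tree Sig rk t \<Longrightarrow> \<forall>w\<in>pos t. \<rho> w \<in> Q \<Longrightarrow> wt \<delta> \<rho> t \<in> Hset Sig rk Q \<delta>"
proof (induction t arbitrary: \<rho>)
  case (Node f ts)
  have fS: "f \<in> Sig" and len: "length ts = rk f" and wfc: "\<forall>t\<in>set ts. wf_tree Sig rk t"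
    using Node.prems by auto
  have pr: "\<rho> [] \<in> Q" using Node.prems Nil_pos by blast
  have ch: "\<rho> [i] \<in> Q" if "i < length ts" for i
    using Node.prems child_pos[OF that Nil_pos] by blast
  have "\<delta> (map (\<lambda>i. \<rho> [i]) [0..<length ts]) f (\<rho> []) \<in> delta_image Sig rk Q \<delta>"
    unfolding delta_image_def
    by (rule CollectI, rule exI[of _ "map (\<lambda>i. \<rho> [i]) [0..<length ts]"], rule exI[of _ f],
        rule exI[of _ "\<rho> []"]) (use fS len pr ch in auto)
  then have d: "\<delta> (map (\<lambda>i. \<rho> [i]) [0..<length ts]) f (\<rho> []) \<in> Hset Sig rk Q \<delta>"
    by (rule Hset.base)
  have w: "\<forall>x\<in>set (map (\<lambda>i. wt \<delta> (\<lambda>w. \<rho> (i # w)) (ts ! i)) [0..<length ts]). x \<in> Hset Sig rk Q \<delta>"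
  proof
    fix x assume "x \<in> set (map (\<lambda>i. wt \<delta> (\<lambda>w. \<rho> (i # w)) (ts ! i)) [0..<length ts])"
    then obtain i where i: "i < length ts" and x: "x = wt \<delta> (\<lambda>w. \<rho> (i # w)) (ts ! i)" by auto
    have "\<forall>w\<in>pos (ts ! i). \<rho> (i # w) \<in> Q" using Node.prems child_pos[OF i] by blast
    then show "x \<in> Hset Sig rk Q \<delta>" unfolding x
      using Node.IH[of "ts ! i"] i wfc by simp
  qed
  show ?case unfolding wt_Node' by (rule prod_list_H[OF w d])
qed

lemma runs_in_Q: "\<rho> \<in> runs Q t \<Longrightarrow> w \<in> pos t \<Longrightarrow> \<rho> w \<in> Q"
  unfolding runs_def by auto

lemma finite_runs: "finite Q \<Longrightarrow> finite (runs Q t)"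
  unfolding runs_def by (intro finite_PiE finite_pos)

lemma pcount_outside:
  assumes "t \<in> trees Sig rk" "x \<notin> Q \<times> Hset Sig rk Q \<delta>"
  shows "pcount Q \<delta> t x = 0"
proof -
  have e: "{\<rho> \<in> qruns Q (fst x) t. wt \<delta> \<rho> t = snd x} = {}"
  proof (rule ccontr)
    assume "{\<rho> \<in> qruns Q (fst x) t. wt \<delta> \<rho> t = snd x} \<noteq> {}"
    then obtain \<rho> where r: "\<rho> \<in> runs Q t" "\<rho> [] = fst x" "wt \<delta> \<rho> t = snd x"
      unfolding qruns_def by auto
    have "fst x \<in> Q" using r runs_in_Q Nil_pos by metis
    moreover have "\<forall>w\<in>pos t. \<rho> w \<in> Q" using r(1) runs_in_Q by blast
    then have "wt \<delta> \<rho> t \<in> Hset Sig rk Q \<delta>" using wt_in_H[of Sig rk t \<rho> Q \<delta>] assms(1)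
      unfolding trees_def by simp
    then have "snd x \<in> Hset Sig rk Q \<delta>" using r(3) by simp
    ultimately show False using assms(2) by (cases x) auto
  qed
  show ?thesis unfolding pcount_def e by simp
qed

definition Psi :: "'f tree list \<Rightarrow> (nat list \<Rightarrow> 'q) \<Rightarrow> ('f tree \<times> (nat list \<Rightarrow> 'q)) list" where
  "Psi ts \<rho> = map (\<lambda>i. (ts ! i, restrict (\<lambda>v. \<rho> (i # v)) (pos (ts ! i)))) [0..<length ts]"

definition Phi :: "'f tree list \<Rightarrow> 'q \<Rightarrow> ('f tree \<times> (nat list \<Rightarrow> 'q)) list \<Rightarrow> nat list \<Rightarrow> 'q" where
  "Phi ts q rs = (\<lambda>w. case w of [] \<Rightarrow> q
      | i # v \<Rightarrow> if i < length ts \<and> v \<in> pos (ts ! i) then snd (rs ! i) v else undefined)"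

definition gg :: "('q list \<Rightarrow> 'f \<Rightarrow> 'q \<Rightarrow> 'b::monoid_mult) \<Rightarrow> 'f tree \<times> (nat list \<Rightarrow> 'q) \<Rightarrow> 'q \<times> 'b" where
  "gg \<delta> = (\<lambda>(t, \<rho>). (\<rho> [], wt \<delta> \<rho> t))"

lemma Psi_in:
  assumes "\<rho> \<in> runs Q (Node f ts)"
  shows "Psi ts \<rho> \<in> listset (map (\<lambda>t. Pair t ` runs Q t) ts)"
  unfolding in_listset_iff
proof (intro conjI allI impI)
  show "length (Psi ts \<rho>) = length (map (\<lambda>t. Pair t ` runs Q t) ts)" by (simp add: Psi_def)
  fix i assume "i < length (map (\<lambda>t. Pair t ` runs Q t) ts)"
  then have i: "i < length ts" by simp
  have "restrict (\<lambda>v. \<rho> (i # v)) (pos (ts ! i)) \<in> runs Q (ts ! i)"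
    unfolding runs_def restrict_PiE_iff using runs_in_Q[OF assms] child_pos[OF i] by blast
  then show "Psi ts \<rho> ! i \<in> map (\<lambda>t. Pair t ` runs Q t) ts ! i"
    using i by (simp add: Psi_def)
qed

lemma map_gg_Psi:
  "map (gg \<delta>) (Psi ts \<rho>) = map (\<lambda>i. (\<rho> [i], wt \<delta> (\<lambda>w. \<rho> (i # w)) (ts ! i))) [0..<length ts]"
proof (rule nth_equalityI)
  show "length (map (gg \<delta>) (Psi ts \<rho>)) = length (map (\<lambda>i. (\<rho> [i], wt \<delta> (\<lambda>w. \<rho> (i # w)) (ts ! i))) [0..<length ts])"
    by (simp add: Psi_def)
  fix i assume "i < length (map (gg \<delta>) (Psi ts \<rho>))"
  then have i: "i < length ts" by (simp add: Psi_def)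
  have "wt \<delta> (restrict (\<lambda>v. \<rho> (i # v)) (pos (ts ! i))) (ts ! i) = wt \<delta> (\<lambda>w. \<rho> (i # w)) (ts ! i)"
    by (rule wt_cong) simp
  then show "map (gg \<delta>) (Psi ts \<rho>) ! i = map (\<lambda>i. (\<rho> [i], wt \<delta> (\<lambda>w. \<rho> (i # w)) (ts ! i))) [0..<length ts] ! i"
    using i Nil_pos[of "ts ! i"] by (simp add: Psi_def gg_def)
qed

lemma pred_Psi:
  "(prod_list (map snd (map (gg \<delta>) (Psi ts \<rho>))) * \<delta> (map fst (map (gg \<delta>) (Psi ts \<rho>))) f (\<rho> []))
   = wt \<delta> \<rho> (Node f ts)"
  unfolding map_gg_Psi wt_Node' by (simp add: comp_def)

lemma Phi_Psi:
  assumes "\<rho> \<in> runs Q (Node f ts)"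
  shows "Phi ts (\<rho> []) (Psi ts \<rho>) = \<rho>"
proof
  fix w show "Phi ts (\<rho> []) (Psi ts \<rho>) w = \<rho> w"
  proof (cases w)
    case Nil then show ?thesis by (simp add: Phi_def)
  next
    case (Cons i v)
    show ?thesis
    proof (cases "i < length ts \<and> v \<in> pos (ts ! i)")
      case True then show ?thesis using Cons by (simp add: Phi_def Psi_def)
    next
      case False
      then have "w \<notin> pos (Node f ts)" using Cons Cons_pos[of i v f ts] by simp
      then have "\<rho> w = undefined" using assms unfolding runs_def by (simp add: PiE_def extensional_def)
      then show ?thesis using False Cons by (auto simp: Phi_def)
    qed
  qed
qed

lemma Phi_in:
  assumes "rs \<in> listset (map (\<lambda>t. Pair t ` runs Q t) ts)" "q \<in> Q"
  shows "Phi ts q rs \<in> runs Q (Node f ts)" "Phi ts q rs [] = q"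
    "Psi ts (Phi ts q rs) = rs"
proof -
  have len: "length rs = length ts" and rsi: "\<And>i. i < length ts \<Longrightarrow> rs ! i \<in> Pair (ts ! i) ` runs Q (ts ! i)"
    using assms(1) unfolding in_listset_iff by auto
  show "Phi ts q rs [] = q" by (simp add: Phi_def)
  show "Phi ts q rs \<in> runs Q (Node f ts)"
    unfolding runs_def PiE_iff
  proof (intro conjI ballI)
    fix w assume w: "w \<in> pos (Node f ts)"
    show "Phi ts q rs w \<in> Q"
    proof (cases w)
      case Nil then show ?thesis using assms(2) by (simp add: Phi_def)
    next
      case (Cons i v)
      then have iv: "i < length ts" "v \<in> pos (ts ! i)" using w Cons_pos[of i v f ts] by simp_all
      then have "snd (rs ! i) \<in> runs Q (ts ! i)" using rsi by force
      then have "snd (rs ! i) v \<in> Q" using runs_in_Q iv by blast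
      then show ?thesis using Cons iv by (simp add: Phi_def)
    qed
  next
    show "Phi ts q rs \<in> extensional (pos (Node f ts))"
      unfolding extensional_def
    proof (intro CollectI allI impI)
      fix w assume w: "w \<notin> pos (Node f ts)"
      then obtain i v where Cons: "w = i # v" using Nil_pos by (cases w) auto
      then have "\<not> (i < length ts \<and> v \<in> pos (ts ! i))" using w Cons_pos[of i v f ts] by simp
      then show "Phi ts q rs w = undefined" using Cons by (auto simp: Phi_def)
    qed
  qed
  show "Psi ts (Phi ts q rs) = rs"
  proof (rule nth_equalityI)
    show "length (Psi ts (Phi ts q rs)) = length rs" using len by (simp add: Psi_def)
    fix i assume "i < length (Psi ts (Phi ts q rs))"
    then have i: "i < length ts" by (simp add: Psi_def)
    obtain r where r: "rs ! i = (ts ! i, r)" "r \<in> runs Q (ts ! i)" using rsi[OF i] by auto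
    have "restrict (\<lambda>v. Phi ts q rs (i # v)) (pos (ts ! i)) = r"
    proof
      fix v show "restrict (\<lambda>v. Phi ts q rs (i # v)) (pos (ts ! i)) v = r v"
        using r i unfolding runs_def by (auto simp: Phi_def PiE_def extensional_def)
    qed
    then show "Psi ts (Phi ts q rs) ! i = rs ! i" using i r by (simp add: Psi_def)
  qed
qed

lemma pcount_Node:
  assumes "q \<in> Q"
  shows "pcount Q \<delta> (Node f ts) (q, b) = card {rs \<in> listset (map (\<lambda>t. Pair t ` runs Q t) ts).
     prod_list (map snd (map (gg \<delta>) rs)) * \<delta> (map fst (map (gg \<delta>) rs)) f q = b}"
proof -
  let ?L = "listset (map (\<lambda>t. Pair t ` runs Q t) ts)"
  let ?P = "\<lambda>rs. prod_list (map snd (map (gg \<delta>) rs)) * \<delta> (map fst (map (gg \<delta>) rs)) f q = b"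
  let ?S = "{\<rho> \<in> qruns Q q (Node f ts). wt \<delta> \<rho> (Node f ts) = b}"
  let ?T = "{rs \<in> ?L. ?P rs}"
  have "bij_betw (Psi ts) ?S ?T"
  proof (rule bij_betw_byWitness[where f' = "Phi ts q"])
    show "\<forall>a\<in>?S. Phi ts q (Psi ts a) = a"
    proof
      fix a assume "a \<in> ?S"
      then have a: "a \<in> runs Q (Node f ts)" "a [] = q" unfolding qruns_def by auto
      show "Phi ts q (Psi ts a) = a" using Phi_Psi[OF a(1)] unfolding a(2) .
    qed
    show "\<forall>a\<in>?T. Psi ts (Phi ts q a) = a"
    proof
      fix a assume "a \<in> ?T"
      then have "a \<in> ?L" by blast
      then show "Psi ts (Phi ts q a) = a" by (rule Phi_in(3)[OF _ assms])
    qed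
    show "Psi ts ` ?S \<subseteq> ?T"
    proof
      fix rs assume "rs \<in> Psi ts ` ?S"
      then obtain \<rho> where r: "\<rho> \<in> runs Q (Node f ts)" "\<rho> [] = q" "wt \<delta> \<rho> (Node f ts) = b" "rs = Psi ts \<rho>"
        unfolding qruns_def by auto
      have "rs \<in> ?L" unfolding r(4) by (rule Psi_in[OF r(1)])
      moreover have "?P rs" using pred_Psi[of \<delta> ts \<rho> f] unfolding r(2) r(3) r(4) .
      ultimately show "rs \<in> ?T" by blast
    qed
    show "Phi ts q ` ?T \<subseteq> ?S"
    proof
      fix \<rho> assume "\<rho> \<in> Phi ts q ` ?T"
      then obtain rs where rs: "rs \<in> ?L" "?P rs" "\<rho> = Phi ts q rs"
        by blast
      note P = Phi_in[OF rs(1) assms]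
      have "wt \<delta> \<rho> (Node f ts) = b"
        using pred_Psi[of \<delta> ts "Phi ts q rs" f] rs(2) unfolding P(2) P(3) rs(3) by simp
      then show "\<rho> \<in> ?S" using P(1,2) unfolding qruns_def rs(3) by blast
    qed
  qed
  then have "card ?S = card ?T" by (rule bij_betw_same_card)
  then show ?thesis unfolding pcount_def by simp
qed

definition Jf :: "nat \<Rightarrow> nat \<Rightarrow> nat \<Rightarrow> nat" where
  "Jf i p n = (if n < i then n else i + (n - i) mod p)"

lemma JA_Jf: "JA Sig rk Q \<delta> F n = Jf (iA Sig rk Q \<delta> F) (pA Sig rk Q \<delta> F) n"
  unfolding JA_def Jf_def by simp

lemma mod_diff_iff_nat:
  fixes n m i p :: nat
  assumes "i \<le> n" "i \<le> m"
  shows "(n - i) mod p = (m - i) mod p \<longleftrightarrow> n mod p = m mod p"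
proof -
  have "(n - i) mod p = (m - i) mod p \<longleftrightarrow> int ((n - i) mod p) = int ((m - i) mod p)" by simp
  also have "\<dots> \<longleftrightarrow> (int n - int i) mod int p = (int m - int i) mod int p"
    using assms by (simp add: of_nat_mod of_nat_diff)
  also have "\<dots> \<longleftrightarrow> int p dvd ((int n - int i) - (int m - int i))" by (rule mod_eq_dvd_iff)
  also have "\<dots> \<longleftrightarrow> int p dvd (int n - int m)" by simp
  also have "\<dots> \<longleftrightarrow> int n mod int p = int m mod int p" by (rule mod_eq_dvd_iff[symmetric])
  also have "\<dots> \<longleftrightarrow> n mod p = m mod p" by (metis of_nat_eq_iff of_nat_mod)
  finally show ?thesis .
qed

lemma Jf_eq_iff: "Jf i p n = Jf i p m \<longleftrightarrow> n = m \<or> (i \<le> n \<and> i \<le> m \<and> n mod p = m mod p)"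
proof (cases "n < i")
  case True
  then show ?thesis unfolding Jf_def by auto
next
  case False
  show ?thesis
  proof (cases "m < i")
    case True
    then show ?thesis using False unfolding Jf_def by auto
  next
    case False2: False
    have "Jf i p n = Jf i p m \<longleftrightarrow> (n - i) mod p = (m - i) mod p" using False False2 unfolding Jf_def by auto
    also have "\<dots> \<longleftrightarrow> n mod p = m mod p" using False False2 by (intro mod_diff_iff_nat) auto
    finally show ?thesis using False False2 by auto
  qed
qed

lemma Jf_add: "Jf i p a = Jf i p a' \<Longrightarrow> Jf i p (a + b) = Jf i p (a' + b)"
  unfolding Jf_eq_iff by (auto intro: mod_add_cong)

lemma Jf_mult: "Jf i p a = Jf i p a' \<Longrightarrow> Jf i p (a * b) = Jf i p (a' * b)"
proof -
  assume "Jf i p a = Jf i p a'"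
  then consider "a = a'" | "i \<le> a" "i \<le> a'" "a mod p = a' mod p" unfolding Jf_eq_iff by blast
  then show ?thesis
  proof cases
    case 1 then show ?thesis by simp
  next
    case 2
    show ?thesis
    proof (cases "b = 0")
      case True then show ?thesis by simp
    next
      case False
      have "a \<le> a * b" "a' \<le> a' * b" using False by (cases b; simp)+
      then have "i \<le> a * b" "i \<le> a' * b" using 2 by linarith+
      moreover have "(a * b) mod p = (a' * b) mod p" using 2 by (intro mod_mult_cong) auto
      ultimately show ?thesis unfolding Jf_eq_iff by blast
    qed
  qed
qed

lemma Jf_less: "0 < p \<Longrightarrow> Jf i p n < i + p"
  unfolding Jf_def by auto

lemma finite_order_rep:
  assumes "finite_order (c::'b::comm_monoid_add)"
  shows "\<exists>i k. 1 \<le> i \<and> 1 \<le> k \<and> natmul i c = natmul (i + k) c"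
proof -
  have sub: "range (\<lambda>n. natmul (Suc n) c) \<subseteq> {natmul n c | n. True}" by blast
  have fin: "finite (range (\<lambda>n. natmul (Suc n) c))"
    using assms unfolding finite_order_def by (rule finite_subset[OF sub])
  have "\<not> inj (\<lambda>n. natmul (Suc n) c)"
    using finite_imageD[OF fin] infinite_UNIV_nat by blast
  then obtain x y where xy: "x \<noteq> y" "natmul (Suc x) c = natmul (Suc y) c"
    unfolding inj_def by blast
  show ?thesis
  proof (cases "x < y")
    case True
    then show ?thesis using xy by (intro exI[of _ "Suc x"] exI[of _ "y - x"]) auto
  next
    case False
    then have "y < x" using xy by auto
    then show ?thesis using xy by (intro exI[of _ "Suc y"] exI[of _ "x - y"]) auto
  qed
qed

lemma ord_period_pos:
  assumes "finite_order (c::'b::comm_monoid_add)"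
  shows "1 \<le> ord_period c"
proof -
  obtain i0 k where ik: "1 \<le> i0" "1 \<le> k" "natmul i0 c = natmul (i0 + k) c"
    using finite_order_rep[OF assms(1)] by blast
  have "1 \<le> ord_index c \<and> (\<exists>k\<ge>1. natmul (ord_index c) c = natmul (ord_index c + k) c)"
    unfolding ord_index_def by (rule LeastI[of _ i0]) (use ik in auto)
  then obtain k0 where k0: "1 \<le> k0" "natmul (ord_index c) c = natmul (ord_index c + k0) c" by blast
  have "1 \<le> ord_period c \<and> natmul (ord_index c) c = natmul (ord_index c + ord_period c) c"
    unfolding ord_period_def by (rule LeastI[of _ k0]) (use k0 in auto)
  then show ?thesis by simp
qed

lemma natmul_J:
  fixes c :: "'b::comm_monoid_add"
  assumes "finite_order c" "ord_index c \<le> I" "ord_period c dvd P"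
  shows "natmul n c = natmul (Jf I P n) c"
proof -
  let ?oi = "ord_index c" and ?op = "ord_period c"
  obtain i0 k where ik: "1 \<le> i0" "1 \<le> k" "natmul i0 c = natmul (i0 + k) c"
    using finite_order_rep[OF assms(1)] by blast
  have "1 \<le> ?oi \<and> (\<exists>k\<ge>1. natmul ?oi c = natmul (?oi + k) c)"
    unfolding ord_index_def by (rule LeastI[of _ i0]) (use ik in auto)
  then obtain k0 where k0: "1 \<le> k0" "natmul ?oi c = natmul (?oi + k0) c" by blast
  have op: "1 \<le> ?op \<and> natmul ?oi c = natmul (?oi + ?op) c"
    unfolding ord_period_def by (rule LeastI[of _ k0]) (use k0 in auto)
  have per: "natmul (m + ?op) c = natmul m c" if "?oi \<le> m" for m
  proof -
    have "m = ?oi + (m - ?oi)" using that by simp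
    then have "natmul (m + ?op) c = natmul (?oi + ?op) c + natmul (m - ?oi) c"
      by (metis add.commute add.left_commute natmul_add)
    also have "\<dots> = natmul ?oi c + natmul (m - ?oi) c" using op by simp
    also have "\<dots> = natmul m c" using that by (metis le_add_diff_inverse natmul_add)
    finally show ?thesis .
  qed
  have perm: "natmul (m + t * ?op) c = natmul m c" if "?oi \<le> m" for m t
  proof (induction t)
    case 0 then show ?case by simp
  next
    case (Suc t)
    have "natmul (m + Suc t * ?op) c = natmul ((m + t * ?op) + ?op) c" by (simp add: algebra_simps)
    also have "\<dots> = natmul (m + t * ?op) c" using that by (intro per) simp
    finally show ?case using Suc by simp
  qed
  show ?thesis
  proof (cases "n < I")
    case True then show ?thesis by (simp add: Jf_def)
  next
    case False
    obtain r where r: "P = ?op * r" using assms(3) by blast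
    have e1: "n - I = (n - I) mod P + (n - I) div P * P" by simp
    have e2: "(n - I) div P * P = ((n - I) div P * r) * ?op" unfolding r by (simp add: algebra_simps)
    have "n = (I + (n - I) mod P) + ((n - I) div P * r) * ?op"
      using False e1 e2 by linarith
    moreover have "?oi \<le> I + (n - I) mod P" using assms(2) by simp
    ultimately have "natmul n c = natmul (I + (n - I) mod P) c" using perm by metis
    then show ?thesis using False by (simp add: Jf_def)
  qed
qed

fun subt :: "'f tree \<Rightarrow> nat list \<Rightarrow> 'f tree" where
  "subt t [] = t"
| "subt (Node f ts) (i # w) = subt (ts ! i) w"

lemma subt_wf: "wf_tree Sig rk t \<Longrightarrow> w \<in> pos t \<Longrightarrow> wf_tree Sig rk (subt t w)"
proof (induction t arbitrary: w)
  case (Node f ts)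
  show ?case
  proof (cases w)
    case Nil then show ?thesis using Node.prems by simp
  next
    case (Cons i v)
    then have iv: "i < length ts" "v \<in> pos (ts ! i)" using Node.prems(2) Cons_pos[of i v f ts] by simp_all
    have "wf_tree Sig rk (ts ! i)" using Node.prems(1) nth_mem[OF iv(1)] by simp
    then have "wf_tree Sig rk (subt (ts ! i) v)" using Node.IH[of "ts ! i" v] iv nth_mem[OF iv(1)] by simp
    then show ?thesis using Cons by simp
  qed
qed

lemma pos_ball: "(\<forall>w\<in>pos (Node f ts). P w) \<longleftrightarrow> P [] \<and> (\<forall>i<length ts. \<forall>v\<in>pos (ts ! i). P (i # v))"
proof
  assume a: "\<forall>w\<in>pos (Node f ts). P w"
  show "P [] \<and> (\<forall>i<length ts. \<forall>v\<in>pos (ts ! i). P (i # v))"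
    using a Nil_pos[of "Node f ts"] child_pos[of _ ts _ f] by blast
next
  assume a: "P [] \<and> (\<forall>i<length ts. \<forall>v\<in>pos (ts ! i). P (i # v))"
  show "\<forall>w\<in>pos (Node f ts). P w"
  proof
    fix w assume w: "w \<in> pos (Node f ts)"
    show "P w"
    proof (cases w)
      case Nil then show ?thesis using a by simp
    next
      case (Cons i v)
      then have "i < length ts" "v \<in> pos (ts ! i)" using w Cons_pos[of i v f ts] by simp_all
      then show ?thesis using a Cons by blast
    qed
  qed
qed

lemma prod_list_ones: "\<forall>x\<in>set xs. x = 1 \<Longrightarrow> prod_list xs = (1::'a::monoid_mult)"
  by (induction xs) auto

lemma prod_list_zero: "(0::'a::{monoid_mult,mult_zero}) \<in> set xs \<Longrightarrow> prod_list xs = 0"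
  by (induction xs) auto

lemma card_Pair_count:
  "card {a \<in> Pair t ` runs Q t. gg \<delta> a = x} = pcount Q \<delta> t x"
proof -
  have "{a \<in> Pair t ` runs Q t. gg \<delta> a = x} = Pair t ` {\<rho> \<in> qruns Q (fst x) t. wt \<delta> \<rho> t = snd x}"
    by (cases x) (auto simp: gg_def qruns_def)
  moreover have "inj_on (Pair t) {\<rho> \<in> qruns Q (fst x) t. wt \<delta> \<rho> t = snd x}"
    by (auto simp: inj_on_def)
  ultimately show ?thesis unfolding pcount_def by (simp add: card_image)
qed

context
  fixes Sig :: "'f set" and rk :: "'f \<Rightarrow> nat" and Q :: "'q set"
    and \<delta> :: "'q list \<Rightarrow> 'f \<Rightarrow> 'q \<Rightarrow> 'b::strong_bimonoid" and F :: "'q \<Rightarrow> 'b"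
  assumes wQ: "wta Q"
    and fop: "finite_order_property Sig rk Q \<delta> F"
begin

abbreviation "H \<equiv> Hset Sig rk Q \<delta>"
abbreviation "J \<equiv> JA Sig rk Q \<delta> F"
abbreviation "pi \<equiv> piA Sig rk Q \<delta> F"

lemma finQ: "finite Q" using wQ unfolding wta_def by simp

lemma finH: "finite H" using fop unfolding finite_order_property_def by simp

lemma HF_eq: "HF Sig rk Q \<delta> F = (\<lambda>(a, c). a * c) ` (H \<times> F ` Q)"
  unfolding HF_def by auto

lemma finHF: "finite (HF Sig rk Q \<delta> F)"
  unfolding HF_eq using finH finQ by simp

lemma natmul_JA:
  assumes "c \<in> HF Sig rk Q \<delta> F"
  shows "natmul n c = natmul (J n) c"
proof -
  have fo: "finite_order c" using fop assms unfolding finite_order_property_def by blast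
  have "ord_index c \<le> iA Sig rk Q \<delta> F"
    unfolding iA_def using finHF assms by (intro Max_ge) auto
  moreover have "ord_period c dvd pA Sig rk Q \<delta> F"
    unfolding pA_def using assms by (intro dvd_Lcm) auto
  ultimately show ?thesis unfolding JA_Jf by (rule natmul_J[OF fo])
qed

lemma pA_pos: "0 < pA Sig rk Q \<delta> F"
proof -
  have "0 \<notin> ord_period ` HF Sig rk Q \<delta> F"
    using ord_period_pos fop unfolding finite_order_property_def by fastforce
  then have "Lcm (ord_period ` HF Sig rk Q \<delta> F) \<noteq> 0"
    using finHF by (simp add: Lcm_0_iff)
  then show ?thesis unfolding pA_def by simp
qed

lemma JA_add: "J a = J a' \<Longrightarrow> J (a + b) = J (a' + b)"
  unfolding JA_Jf by (rule Jf_add)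

lemma JA_mult: "J a = J a' \<Longrightarrow> J (a * b) = J (a' * b)"
  unfolding JA_Jf by (rule Jf_mult)

lemma piA_cong:
  assumes "\<forall>t\<in>set ts. t \<in> trees Sig rk" "\<forall>t\<in>set ts'. t \<in> trees Sig rk"
    "length ts = length ts'" "map pi ts = map pi ts'"
  shows "pi (Node f ts) = pi (Node f ts')"
proof
  fix x :: "'q \<times> 'b"
  obtain q b where x: "x = (q, b)" by (cases x)
  show "pi (Node f ts) x = pi (Node f ts') x"
  proof (cases "x \<in> Q \<times> H")
    case False then show ?thesis unfolding piA_def by simp
  next
    case True
    then have q: "q \<in> Q" using x by simp
    have "J (card {rs \<in> listset (map (\<lambda>t. Pair t ` runs Q t) ts).
        (\<lambda>ys. prod_list (map snd ys) * \<delta> (map fst ys) f q = b) (map (gg \<delta>) rs)})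
      = J (card {rs \<in> listset (map (\<lambda>t. Pair t ` runs Q t) ts').
        (\<lambda>ys. prod_list (map snd ys) * \<delta> (map fst ys) f q = b) (map (gg \<delta>) rs)})"
    proof (rule count_cong[where J = J])
      show "\<And>a a' b. J a = J a' \<Longrightarrow> J (a + b) = J (a' + b)" by (rule JA_add)
      show "\<And>a a' b. J a = J a' \<Longrightarrow> J (a * b) = J (a' * b)" by (rule JA_mult)
      show "length (map (\<lambda>t. Pair t ` runs Q t) ts) = length (map (\<lambda>t. Pair t ` runs Q t) ts')"
        using assms(3) by simp
      show "\<forall>A\<in>set (map (\<lambda>t. Pair t ` runs Q t) ts). finite A"
        using finite_runs[OF finQ] by auto
      show "\<forall>A\<in>set (map (\<lambda>t. Pair t ` runs Q t) ts'). finite A"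
        using finite_runs[OF finQ] by auto
      show "\<forall>i<length (map (\<lambda>t. Pair t ` runs Q t) ts). \<forall>y.
          J (card {a \<in> map (\<lambda>t. Pair t ` runs Q t) ts ! i. gg \<delta> a = y}) =
          J (card {a \<in> map (\<lambda>t. Pair t ` runs Q t) ts' ! i. gg \<delta> a = y})"
      proof (intro allI impI)
        fix i y assume "i < length (map (\<lambda>t. Pair t ` runs Q t) ts)"
        then have i: "i < length ts" "i < length ts'" using assms(3) by auto
        have tr: "ts ! i \<in> trees Sig rk" "ts' ! i \<in> trees Sig rk"
          using assms(1,2) i nth_mem by blast+
        have pe: "pi (ts ! i) = pi (ts' ! i)" using assms(4) i
          by (metis nth_map)
        have "J (pcount Q \<delta> (ts ! i) y) = J (pcount Q \<delta> (ts' ! i) y)"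
        proof (cases "y \<in> Q \<times> H")
          case True
          then show ?thesis using pe unfolding piA_def by (metis (no_types, lifting))
        next
          case False
          then show ?thesis using pcount_outside[OF tr(1) False] pcount_outside[OF tr(2) False] by simp
        qed
        then show "J (card {a \<in> map (\<lambda>t. Pair t ` runs Q t) ts ! i. gg \<delta> a = y}) =
          J (card {a \<in> map (\<lambda>t. Pair t ` runs Q t) ts' ! i. gg \<delta> a = y})"
          using i by (simp add: card_Pair_count)
      qed
    qed
    then have "J (pcount Q \<delta> (Node f ts) (q, b)) = J (pcount Q \<delta> (Node f ts') (q, b))"
      unfolding pcount_Node[OF q] by simp
    then show ?thesis using True x unfolding piA_def by simp
  qed
qed

end

context
  fixes Sig :: "'f set" and rk :: "'f \<Rightarrow> nat" and Q :: "'q set"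
    and \<delta> :: "'q list \<Rightarrow> 'f \<Rightarrow> 'q \<Rightarrow> 'b::strong_bimonoid" and F :: "'q \<Rightarrow> 'b"
  assumes wQ: "wta Q"
    and fop: "finite_order_property Sig rk Q \<delta> F"
begin

abbreviation "H' \<equiv> Hset Sig rk Q \<delta>"
abbreviation "J' \<equiv> JA Sig rk Q \<delta> F"
abbreviation "pi' \<equiv> piA Sig rk Q \<delta> F"
abbreviation "dR \<equiv> deltaR Sig rk Q \<delta> F"

lemma deltaR_eq:
  assumes "\<forall>t\<in>set ts. t \<in> trees Sig rk"
  shows "dR (map pi' ts) f \<pi> = (if \<pi> = pi' (Node f ts) then 1 else 0)"
proof -
  define ts' where "ts' = map (\<lambda>\<pi>'. SOME \<xi>. \<xi> \<in> trees Sig rk \<and> pi' \<xi> = \<pi>') (map pi' ts)"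
  have t': "ts' ! i \<in> trees Sig rk \<and> pi' (ts' ! i) = pi' (ts ! i)" if "i < length ts" for i
  proof -
    have "ts' ! i = (SOME \<xi>. \<xi> \<in> trees Sig rk \<and> pi' \<xi> = pi' (ts ! i))"
      unfolding ts'_def using that by simp
    moreover have "ts ! i \<in> trees Sig rk" using assms that nth_mem by blast
    ultimately show ?thesis by (metis (mono_tags, lifting) someI)
  qed
  have len: "length ts' = length ts" unfolding ts'_def by simp
  have "\<forall>t\<in>set ts'. t \<in> trees Sig rk" using t' len by (metis in_set_conv_nth)
  moreover have "map pi' ts' = map pi' ts" using t' len by (intro nth_equalityI) auto
  ultimately have "pi' (Node f ts') = pi' (Node f ts)"
    using piA_cong[OF wQ fop _ assms] len by metis
  then show ?thesis unfolding deltaR_def ts'_def[symmetric] by simp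
qed

lemma wtR:
  "wf_tree Sig rk \<xi> \<Longrightarrow> wt dR \<rho> \<xi> = (if \<forall>w\<in>pos \<xi>. \<rho> w = pi' (subt \<xi> w) then 1 else 0)"
proof (induction \<xi> arbitrary: \<rho>)
  case (Node f ts)
  have wfc: "\<forall>t\<in>set ts. wf_tree Sig rk t" using Node.prems by simp
  have trc: "\<forall>t\<in>set ts. t \<in> trees Sig rk" using wfc unfolding trees_def by simp
  define C where "C i = (\<forall>w\<in>pos (ts ! i). \<rho> (i # w) = pi' (subt (ts ! i) w))" for i
  have ch: "wt dR (\<lambda>w. \<rho> (i # w)) (ts ! i) = (if C i then 1 else 0)" if "i < length ts" for i
    unfolding C_def using Node.IH[of "ts ! i"] wfc that nth_mem by blast
  have full: "(\<forall>w\<in>pos (Node f ts). \<rho> w = pi' (subt (Node f ts) w)) \<longleftrightarrow>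
      \<rho> [] = pi' (Node f ts) \<and> (\<forall>i<length ts. C i)"
    unfolding pos_ball C_def by simp
  show ?case
  proof (cases "\<forall>i<length ts. C i")
    case True
    have p1: "prod_list (map (\<lambda>i. wt dR (\<lambda>w. \<rho> (i # w)) (ts ! i)) [0..<length ts]) = 1"
      using ch True by (intro prod_list_ones) auto
    have "\<rho> [i] = pi' (ts ! i)" if "i < length ts" for i
      using True that Nil_pos[of "ts ! i"] unfolding C_def by fastforce
    then have "map (\<lambda>i. \<rho> [i]) [0..<length ts] = map pi' ts"
      by (intro nth_equalityI) auto
    then show ?thesis unfolding wt_Node' p1 full using True deltaR_eq[OF trc] by simp
  next
    case False
    then obtain j where j: "j < length ts" "\<not> C j" by blast
    have "0 \<in> set (map (\<lambda>i. wt dR (\<lambda>w. \<rho> (i # w)) (ts ! i)) [0..<length ts])"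
      using ch[OF j(1)] j by force
    then have "prod_list (map (\<lambda>i. wt dR (\<lambda>w. \<rho> (i # w)) (ts ! i)) [0..<length ts]) = 0"
      by (rule prod_list_zero)
    then show ?thesis unfolding wt_Node' full using False by simp
  qed
qed

lemma finQ': "finite Q" using wQ unfolding wta_def by simp
lemma finH': "finite H'" using fop unfolding finite_order_property_def by simp

lemma piA_bound: "pi' \<xi> x < iA Sig rk Q \<delta> F + pA Sig rk Q \<delta> F"
  unfolding piA_def JA_Jf using Jf_less[OF pA_pos[OF wQ fop]] pA_pos[OF wQ fop] by auto

lemma QR_finite: "finite (QR Sig rk Q \<delta> F)"
proof -
  let ?N = "iA Sig rk Q \<delta> F + pA Sig rk Q \<delta> F"
  let ?G = "{g. \<forall>x. (x \<notin> Q \<times> H' \<longrightarrow> g x = 0) \<and> g x < ?N}"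
  have sub: "QR Sig rk Q \<delta> F \<subseteq> ?G"
    unfolding QR_def using piA_bound by (auto simp: piA_def)
  have "inj_on (\<lambda>g. restrict g (Q \<times> H')) ?G"
  proof (rule inj_onI)
    fix g g' assume g: "g \<in> ?G" "g' \<in> ?G" and e: "restrict g (Q \<times> H') = restrict g' (Q \<times> H')"
    show "g = g'"
    proof
      fix x show "g x = g' x"
      proof (cases "x \<in> Q \<times> H'")
        case True then show ?thesis using fun_cong[OF e, of x] by simp
      next
        case False
        have "x \<notin> Q \<times> H' \<longrightarrow> g x = 0" using spec[OF g(1)[unfolded mem_Collect_eq], of x] by (rule conjunct1)
        moreover have "x \<notin> Q \<times> H' \<longrightarrow> g' x = 0" using spec[OF g(2)[unfolded mem_Collect_eq], of x] by (rule conjunct1)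
        ultimately show ?thesis using False by simp
      qed
    qed
  qed
  moreover have "(\<lambda>g. restrict g (Q \<times> H')) ` ?G \<subseteq> (Q \<times> H') \<rightarrow>\<^sub>E {..<?N}"
  proof
    fix r assume "r \<in> (\<lambda>g. restrict g (Q \<times> H')) ` ?G"
    then obtain g where g: "g \<in> ?G" "r = restrict g (Q \<times> H')" by blast
    have "\<forall>x\<in>Q \<times> H'. g x \<in> {..<?N}"
    proof
      fix x assume "x \<in> Q \<times> H'"
      show "g x \<in> {..<?N}" using spec[OF g(1)[unfolded mem_Collect_eq], of x] by simp
    qed
    then show "r \<in> (Q \<times> H') \<rightarrow>\<^sub>E {..<?N}" unfolding g(2) restrict_PiE_iff .
  qed
  moreover have "finite ((Q \<times> H') \<rightarrow>\<^sub>E {..<?N})"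
    using finQ' finH' by (intro finite_PiE) auto
  ultimately have "finite ?G" by (rule inj_on_finite)
  then show ?thesis using sub finite_subset by blast
qed

lemma semA:
  assumes "\<xi> \<in> trees Sig rk"
  shows "run_sem Q \<delta> F \<xi> = FR Sig rk Q \<delta> F (pi' \<xi>)"
proof -
  let ?g = "\<lambda>\<rho>. (\<rho> [], wt \<delta> \<rho> \<xi>)"
  let ?h = "\<lambda>x. snd x * F (fst x)"
  have "run_sem Q \<delta> F \<xi> = (\<Sum>\<rho>\<in>runs Q \<xi>. ?h (?g \<rho>))" unfolding run_sem_def by simp
  also have "\<dots> = (\<Sum>x\<in>Q \<times> H'. natmul (card {\<rho>\<in>runs Q \<xi>. ?g \<rho> = x}) (?h x))"
  proof (rule sum_group_natmul)
    show "finite (runs Q \<xi>)" by (rule finite_runs[OF finQ'])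
    show "finite (Q \<times> H')" using finQ' finH' by simp
    show "?g ` runs Q \<xi> \<subseteq> Q \<times> H'"
    proof
      fix x assume "x \<in> ?g ` runs Q \<xi>"
      then obtain \<rho> where r: "\<rho> \<in> runs Q \<xi>" "x = ?g \<rho>" by blast
      have "\<rho> [] \<in> Q" using runs_in_Q[OF r(1) Nil_pos] .
      moreover have "wt \<delta> \<rho> \<xi> \<in> H'"
        using wt_in_H[of Sig rk \<xi> \<rho> Q \<delta>] assms runs_in_Q[OF r(1)] unfolding trees_def by blast
      ultimately show "x \<in> Q \<times> H'" using r(2) by simp
    qed
  qed
  also have "\<dots> = (\<Sum>x\<in>Q \<times> H'. natmul (pi' \<xi> x) (?h x))"
  proof (rule sum.cong[OF refl])
    fix x assume x: "x \<in> Q \<times> H'"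
    have c: "card {\<rho>\<in>runs Q \<xi>. ?g \<rho> = x} = pcount Q \<delta> \<xi> x"
    proof -
      have "{\<rho>\<in>runs Q \<xi>. ?g \<rho> = x} = {\<rho> \<in> qruns Q (fst x) \<xi>. wt \<delta> \<rho> \<xi> = snd x}"
        unfolding qruns_def by (cases x) auto
      then show ?thesis unfolding pcount_def by simp
    qed
    obtain q y where qy: "x = (q, y)" by (cases x)
    have yq: "y \<in> H'" "q \<in> Q" using x qy by auto
    have "y * F q \<in> HF Sig rk Q \<delta> F" unfolding HF_def
      by (rule CollectI, rule exI[of _ y], rule exI[of _ "F q"]) (use yq in auto)
    then have hx: "?h x \<in> HF Sig rk Q \<delta> F" using qy by simp
    then show "natmul (card {\<rho>\<in>runs Q \<xi>. ?g \<rho> = x}) (?h x) = natmul (pi' \<xi> x) (?h x)"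
      unfolding c piA_def using x natmul_JA[OF wQ fop hx, of "pcount Q \<delta> \<xi> x"] by simp
  qed
  also have "\<dots> = FR Sig rk Q \<delta> F (pi' \<xi>)"
    unfolding FR_def by (rule sum.cong) auto
  finally show ?thesis .
qed

lemma semR:
  assumes "\<xi> \<in> trees Sig rk"
  shows "run_sem (QR Sig rk Q \<delta> F) dR (FR Sig rk Q \<delta> F) \<xi> = FR Sig rk Q \<delta> F (pi' \<xi>)"
proof -
  let ?R = "runs (QR Sig rk Q \<delta> F) \<xi>"
  define \<rho>0 where "\<rho>0 = restrict (\<lambda>w. pi' (subt \<xi> w)) (pos \<xi>)"
  have wf: "wf_tree Sig rk \<xi>" using assms unfolding trees_def by simp
  have r0: "\<rho>0 \<in> ?R"
    unfolding runs_def \<rho>0_def restrict_PiE_iff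
  proof
    fix w assume "w \<in> pos \<xi>"
    then have "subt \<xi> w \<in> trees Sig rk" using subt_wf[OF wf] unfolding trees_def by simp
    then show "pi' (subt \<xi> w) \<in> QR Sig rk Q \<delta> F" unfolding QR_def by simp
  qed
  have "run_sem (QR Sig rk Q \<delta> F) dR (FR Sig rk Q \<delta> F) \<xi>
      = (\<Sum>\<rho>\<in>?R. if \<rho> = \<rho>0 then FR Sig rk Q \<delta> F (\<rho>0 []) else 0)"
    unfolding run_sem_def
  proof (rule sum.cong[OF refl])
    fix \<rho> assume r: "\<rho> \<in> ?R"
    have "(\<forall>w\<in>pos \<xi>. \<rho> w = pi' (subt \<xi> w)) \<longleftrightarrow> \<rho> = \<rho>0"
    proof
      assume a: "\<forall>w\<in>pos \<xi>. \<rho> w = pi' (subt \<xi> w)"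
      show "\<rho> = \<rho>0"
      proof (rule extensionalityI[of _ "pos \<xi>"])
        show "\<rho> \<in> extensional (pos \<xi>)" using r unfolding runs_def by (simp add: PiE_iff)
        show "\<rho>0 \<in> extensional (pos \<xi>)" unfolding \<rho>0_def by simp
        fix w assume "w \<in> pos \<xi>" then show "\<rho> w = \<rho>0 w" using a unfolding \<rho>0_def by simp
      qed
    next
      assume "\<rho> = \<rho>0" then show "\<forall>w\<in>pos \<xi>. \<rho> w = pi' (subt \<xi> w)" unfolding \<rho>0_def by simp
    qed
    then show "wt dR \<rho> \<xi> * FR Sig rk Q \<delta> F (\<rho> []) = (if \<rho> = \<rho>0 then FR Sig rk Q \<delta> F (\<rho>0 []) else 0)"
      unfolding wtR[OF wf] by simp
  qed
  also have "\<dots> = FR Sig rk Q \<delta> F (\<rho>0 [])"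
    using sum.delta[OF finite_runs[OF QR_finite, of \<xi>], of \<rho>0 "\<lambda>_. FR Sig rk Q \<delta> F (\<rho>0 [])"] r0 by simp
  also have "\<rho>0 [] = pi' \<xi>" unfolding \<rho>0_def using Nil_pos[of \<xi>] by simp
  finally show ?thesis .
qed

end

theorem theorem7p3:
  fixes Sig :: "'f set" and rk :: "'f \<Rightarrow> nat" and Q :: "'q set"
    and \<delta> :: "'q list \<Rightarrow> 'f \<Rightarrow> 'q \<Rightarrow> 'b::strong_bimonoid" and F :: "'q \<Rightarrow> 'b"
  assumes "ranked_alphabet Sig rk"
    and "wta Q"
    and "finite_order_property Sig rk Q \<delta> F"
  shows "\<forall>\<xi>\<in>trees Sig rk.
           run_sem (QR Sig rk Q \<delta> F) (deltaR Sig rk Q \<delta> F) (FR Sig rk Q \<delta> F) \<xi> = run_sem Q \<delta> F \<xi>"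
  using semA[OF assms(2,3)] semR[OF assms(2,3)] by simp

end
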